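(* Let $L>0$ and consider the sixth-order ODE $$\tfrac12\,\theta=\theta^2\bigl(\theta^{(6)}+\theta\bigr).$$ (i) There is no function $\theta\in C^6([-L,L])$, $\theta\not\equiv0$, solving this ODE on $(-L,L)$ with $\theta(\pm L)=\theta'(\pm L)=\theta''(\pm L)=0$. (ii) There is no $\theta\in C^6(\mathbb{R})$, $\theta\not\equiv 0$, with $\theta,\theta',\dots,\theta^{(5)}$ bounded on $\mathbb{R}$, solving this ODE on $\mathbb{R}$ with $\theta(x)\to0$ as $x\to\pm\infty$.
   Context: This is the profile equation for separable blow-up solutions $u=(T-t)^{-1/2}\theta(x)$ of $u_t=u^2(u_{xxxxxx}+u)$. For non-vanishing solutions one has the first integral $\tfrac12\ln|\theta|=\theta^{(5)}\theta'-\theta^{(4)}\theta''+\tfrac12(\theta'')^2+\tfrac12\theta^2+C$, $C\in\mathbb{R}$ a constant. *)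

theory Defs
  imports "HOL-Analysis.Analysis"
begin

text \<open>C^n regularity on a set S, given by an explicit chain of derivatives:
  D 0 is the function, D (Suc k) is the derivative of D k (taken within S,
  i.e. one-sided at endpoints of a closed interval) for k < n, and D n is continuous on S.\<close>
definition Ck_chain :: "nat \<Rightarrow> real set \<Rightarrow> (nat \<Rightarrow> real \<Rightarrow> real) \<Rightarrow> bool" where
  "Ck_chain n S D \<longleftrightarrow>
     (\<forall>k<n. \<forall>x\<in>S. (D k has_real_derivative D (Suc k) x) (at x within S))
     \<and> continuous_on S (D n)"

end

theory Submission
  imports Defs
begin

lemma core:
  fixes f g :: "real \<Rightarrow> real"
  assumes lim: "(f \<longlongrightarrow> 0) F" and nt: "F \<noteq> bot"
    and ev: "eventually (\<lambda>y. f y \<noteq> 0 \<and> 1/2 * f y = (f y)^2 * (g y + f y) \<and> \<bar>g y\<bar> \<le> M \<and> \<bar>f y\<bar> \<le> B) F"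
  shows False
proof -
  define e where "e = 1 / (2 * (\<bar>M\<bar> + \<bar>B\<bar> + 1))"
  have e: "e > 0" unfolding e_def by (simp add: add_pos_nonneg)
  have "eventually (\<lambda>y. dist (f y) 0 < e) F" using lim e by (rule tendstoD)
  with ev have "eventually (\<lambda>y. False) F"
  proof eventually_elim
    case (elim y)
    then have fy: "f y \<noteq> 0" and eq: "1/2 * f y = (f y)^2 * (g y + f y)"
      and gM: "\<bar>g y\<bar> \<le> M" and fB: "\<bar>f y\<bar> \<le> B" and fe: "\<bar>f y\<bar> < e" by auto
    have "f y * (1/2 - f y * (g y + f y)) = 0" using eq by (simp add: power2_eq_square algebra_simps)
    then have "1/2 = f y * (g y + f y)" using fy by simp
    then have "1/2 = \<bar>f y\<bar> * \<bar>g y + f y\<bar>" by (metis abs_mult abs_of_pos zero_less_divide_iff zero_less_numeral zero_less_one)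
    also have "\<dots> \<le> e * (\<bar>M\<bar> + \<bar>B\<bar>)"
      by (rule mult_mono) (use fe gM fB in auto)
    also have "\<dots> < e * (\<bar>M\<bar> + \<bar>B\<bar> + 1)" using e by simp
    also have "\<dots> = 1/2" unfolding e_def by (simp add: field_simps add_pos_nonneg)
    finally show False by simp
  qed
  with nt show False by (simp add: eventually_False)
qed

lemma right_zero:
  fixes f g :: "real \<Rightarrow> real"
  assumes cont: "continuous_on {x0..z} f" and fx0: "f x0 \<noteq> 0" and fz: "f z = 0" and xz: "x0 \<le> z"
    and bd: "\<forall>y\<in>{x0..z}. \<bar>g y\<bar> \<le> M \<and> \<bar>f y\<bar> \<le> B"
    and eq: "\<forall>y\<in>{x0<..<z}. 1/2 * f y = (f y)^2 * (g y + f y)"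
  shows False
proof -
  define Z where "Z = {x\<in>{x0..z}. f x = 0}"
  have "closed Z" unfolding Z_def by (rule continuous_closed_preimage_constant[OF cont]) simp
  moreover have "bounded Z" by (rule bounded_subset[OF bounded_closed_interval[of x0 z]]) (auto simp: Z_def)
  ultimately have cZ: "compact Z" by (simp add: compact_eq_bounded_closed)
  have nZ: "Z \<noteq> {}" using fz xz unfolding Z_def by auto
  from compact_attains_inf[OF cZ nZ] obtain z0 where z0: "z0 \<in> Z" and min0: "\<forall>t\<in>Z. z0 \<le> t" by blast
  have min: "z0 \<le> x" if "x \<in> Z" for x using min0 that by blast
  have z0Z: "x0 \<le> z0" "z0 \<le> z" "f z0 = 0" using z0 unfolding Z_def by auto
  have lt: "x0 < z0" using z0Z fx0 by (cases "x0 = z0") auto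
  have "continuous_on {x0..z0} f" by (rule continuous_on_subset[OF cont]) (use z0Z in auto)
  then have "(f \<longlongrightarrow> f z0) (at z0 within {x0..z0})"
    by (rule continuous_on_def[THEN iffD1, rule_format]) (use lt in auto)
  then have lim: "(f \<longlongrightarrow> 0) (at_left z0)" using at_within_Icc_at_left[OF lt] z0Z by simp
  have "eventually (\<lambda>y. y \<in> {x0<..<z0}) (at_left z0)" using lt by (rule eventually_at_left_real)
  then have "eventually (\<lambda>y. f y \<noteq> 0 \<and> 1/2 * f y = (f y)^2 * (g y + f y) \<and> \<bar>g y\<bar> \<le> M \<and> \<bar>f y\<bar> \<le> B) (at_left z0)"
  proof eventually_elim
    case (elim y)
    have nz: "f y \<noteq> 0"
    proof
      assume "f y = 0" then have "y \<in> Z" using elim z0Z unfolding Z_def by auto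
      then show False using min[of y] elim by auto
    qed
    show ?case using nz eq bd elim z0Z by auto
  qed
  then show False using core[OF lim] by simp
qed

lemma left_zero:
  fixes f g :: "real \<Rightarrow> real"
  assumes cont: "continuous_on {z..x0} f" and fx0: "f x0 \<noteq> 0" and fz: "f z = 0" and xz: "z \<le> x0"
    and bd: "\<forall>y\<in>{z..x0}. \<bar>g y\<bar> \<le> M \<and> \<bar>f y\<bar> \<le> B"
    and eq: "\<forall>y\<in>{z<..<x0}. 1/2 * f y = (f y)^2 * (g y + f y)"
  shows False
proof -
  define Z where "Z = {x\<in>{z..x0}. f x = 0}"
  have "closed Z" unfolding Z_def by (rule continuous_closed_preimage_constant[OF cont]) simp
  moreover have "bounded Z" by (rule bounded_subset[OF bounded_closed_interval[of z x0]]) (auto simp: Z_def)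
  ultimately have cZ: "compact Z" by (simp add: compact_eq_bounded_closed)
  have nZ: "Z \<noteq> {}" using fz xz unfolding Z_def by auto
  from compact_attains_sup[OF cZ nZ] obtain z0 where z0: "z0 \<in> Z" and max0: "\<forall>t\<in>Z. t \<le> z0" by blast
  have max: "x \<le> z0" if "x \<in> Z" for x using max0 that by blast
  have z0Z: "z0 \<le> x0" "z \<le> z0" "f z0 = 0" using z0 unfolding Z_def by auto
  have lt: "z0 < x0" using z0Z fx0 by (cases "x0 = z0") auto
  have "continuous_on {z0..x0} f" by (rule continuous_on_subset[OF cont]) (use z0Z in auto)
  then have "(f \<longlongrightarrow> f z0) (at z0 within {z0..x0})"
    by (rule continuous_on_def[THEN iffD1, rule_format]) (use lt in auto)
  then have lim: "(f \<longlongrightarrow> 0) (at_right z0)" using at_within_Icc_at_right[OF lt] z0Z by simp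
  have "eventually (\<lambda>y. y \<in> {z0<..<x0}) (at_right z0)" using lt by (rule eventually_at_right_real)
  then have "eventually (\<lambda>y. f y \<noteq> 0 \<and> 1/2 * f y = (f y)^2 * (g y + f y) \<and> \<bar>g y\<bar> \<le> M \<and> \<bar>f y\<bar> \<le> B) (at_right z0)"
  proof eventually_elim
    case (elim y)
    have nz: "f y \<noteq> 0"
    proof
      assume "f y = 0" then have "y \<in> Z" using elim z0Z unfolding Z_def by auto
      then show False using max[of y] elim by auto
    qed
    show ?case using nz eq bd elim z0Z by auto
  qed
  then show False using core[OF lim] by simp
qed


lemma cbound:
  fixes f :: "real \<Rightarrow> real"
  assumes "continuous_on {a..b} f"
  shows "\<exists>M. \<forall>y\<in>{a..b}. \<bar>f y\<bar> \<le> M"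
proof -
  have "bounded (f ` {a..b})" using compact_continuous_image[OF assms] compact_Icc by (metis compact_imp_bounded)
  then show ?thesis unfolding bounded_real by auto
qed

lemma part1:
  fixes L :: real and D :: "nat \<Rightarrow> real \<Rightarrow> real"
  assumes L: "L > 0" and ck: "Ck_chain 6 {-L..L} D"
    and ex: "\<exists>x\<in>{-L..L}. D 0 x \<noteq> 0"
    and eq: "\<forall>x\<in>{-L<..<L}. (1/2) * D 0 x = (D 0 x)^2 * (D 6 x + D 0 x)"
    and b1: "D 0 L = 0" and b2: "D 0 (-L) = 0"
  shows False
proof -
  have der: "\<forall>x\<in>{-L..L}. (D 0 has_real_derivative D 1 x) (at x within {-L..L})"
    and c6: "continuous_on {-L..L} (D 6)" using ck unfolding Ck_chain_def by auto
  have c0: "continuous_on {-L..L} (D 0)" using der by (intro DERIV_continuous_on) auto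
  obtain M where M: "\<forall>y\<in>{-L..L}. \<bar>D 6 y\<bar> \<le> M" using cbound[OF c6] by blast
  obtain B where B: "\<forall>y\<in>{-L..L}. \<bar>D 0 y\<bar> \<le> B" using cbound[OF c0] by blast
  obtain x0 where x0: "x0 \<in> {-L..L}" "D 0 x0 \<noteq> 0" using ex by blast
  have "x0 \<noteq> -L" using x0 b2 by auto
  with x0 have x0': "-L < x0" "x0 \<le> L" by auto
  show False
  proof (rule right_zero[of x0 L "D 0" "D 6" M B])
    show "continuous_on {x0..L} (D 0)" using c0 by (rule continuous_on_subset) (use x0' in auto)
    show "\<forall>y\<in>{x0..L}. \<bar>D 6 y\<bar> \<le> M \<and> \<bar>D 0 y\<bar> \<le> B" using M B x0' by auto
    show "\<forall>y\<in>{x0<..<L}. 1 / 2 * D 0 y = (D 0 y)\<^sup>2 * (D 6 y + D 0 y)" using eq x0' by auto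
  qed (use x0 x0' b1 in auto)
qed

lemma part2:
  fixes D :: "nat \<Rightarrow> real \<Rightarrow> real"
  assumes ck: "Ck_chain 6 UNIV D"
    and ex: "\<exists>x. D 0 x \<noteq> 0"
    and bd: "\<forall>k\<le>5. bounded (range (D k))"
    and eq: "\<forall>x. (1/2) * D 0 x = (D 0 x)^2 * (D 6 x + D 0 x)"
    and lt: "(D 0 \<longlongrightarrow> 0) at_top"
  shows False
proof -
  have der: "\<And>k x. k < 6 \<Longrightarrow> (D k has_real_derivative D (Suc k) x) (at x)"
    and c6: "continuous_on UNIV (D 6)" using ck unfolding Ck_chain_def by auto
  have c0: "continuous_on UNIV (D 0)" using der[of 0] by (intro DERIV_continuous_on) auto
  have c0': "continuous_on {a..b} (D 0)" for a b by (rule continuous_on_subset[OF c0]) simp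
  have c6': "continuous_on {a..b} (D 6)" for a b by (rule continuous_on_subset[OF c6]) simp
  have "bounded (range (D 0))" using bd by simp
  then obtain B where B: "\<forall>y. \<bar>D 0 y\<bar> \<le> B" unfolding bounded_real by blast
  have "bounded (range (D 5))" using bd by simp
  then obtain K where K: "\<forall>y. \<bar>D 5 y\<bar> \<le> K" unfolding bounded_real by blast
  obtain x0 where x0: "D 0 x0 \<noteq> 0" using ex by blast
  have nz: "D 0 z \<noteq> 0" for z
  proof
    assume z: "D 0 z = 0"
    show False
    proof (cases "x0 \<le> z")
      case True
      obtain M where M: "\<forall>y\<in>{x0..z}. \<bar>D 6 y\<bar> \<le> M" using cbound[OF c6'] by blast
      show False
      proof (rule right_zero[of x0 z "D 0" "D 6" M B])
        show "\<forall>y\<in>{x0..z}. \<bar>D 6 y\<bar> \<le> M \<and> \<bar>D 0 y\<bar> \<le> B" using M B by blast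
        show "\<forall>y\<in>{x0<..<z}. 1 / 2 * D 0 y = (D 0 y)\<^sup>2 * (D 6 y + D 0 y)" using eq by blast
      qed (rule c0' x0 z True)+
    next
      case False
      then have F: "z \<le> x0" by simp
      obtain M where M: "\<forall>y\<in>{z..x0}. \<bar>D 6 y\<bar> \<le> M" using cbound[OF c6'] by blast
      show False
      proof (rule left_zero[of z x0 "D 0" "D 6" M B])
        show "\<forall>y\<in>{z..x0}. \<bar>D 6 y\<bar> \<le> M \<and> \<bar>D 0 y\<bar> \<le> B" using M B by blast
        show "\<forall>y\<in>{z<..<x0}. 1 / 2 * D 0 y = (D 0 y)\<^sup>2 * (D 6 y + D 0 y)" using eq by blast
      qed (rule c0' x0 z F)+
    qed
  qed
  have "eventually (\<lambda>y. dist (D 0 y) 0 < 1/4) at_top" using lt by (rule tendstoD) simp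
  then obtain X where X: "\<forall>y\<ge>X. \<bar>D 0 y\<bar> < 1/4"
    unfolding eventually_at_top_linorder dist_real_def by auto
  define X' where "X' = max X x0"
  have d5: "\<And>x. (D 5 has_real_derivative D 6 x) (at x)" using der[of 5] by simp
  have K0: "K \<ge> 0" using K[rule_format, of 0] by linarith
  define y where "y = X' + 2 * K + 1"
  have Xy: "X' \<le> y" using K0 unfolding y_def by simp
  have e: "D 0 t * (D 6 t + D 0 t) = 1/2" for t
  proof -
    have "D 0 t * (1/2 - D 0 t * (D 6 t + D 0 t)) = 0" using eq[rule_format, of t] by (simp add: power2_eq_square algebra_simps)
    then show ?thesis using nz[of t] by simp
  qed
  show False
  proof (cases "D 0 x0 > 0")
    case True
    have pos: "D 0 t > 0" if "t \<ge> x0" for t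
    proof (rule ccontr)
      assume "\<not> D 0 t > 0"
      then have "D 0 t \<le> 0" by simp
      from IVT2'[of "D 0" t 0 x0, OF this _ that c0'] True obtain w where "D 0 w = 0" by auto
      with nz show False by blast
    qed
    have g1: "D 6 t \<ge> 1" if "t \<ge> X'" for t
    proof -
      have p: "D 0 t > 0" "D 0 t < 1/4" using pos[of t] X that unfolding X'_def by auto
      have "D 6 t + D 0 t > 2"
      proof (rule ccontr)
        assume "\<not> ?thesis"
        then have "D 0 t * (D 6 t + D 0 t) \<le> D 0 t * 2" using p by (intro mult_left_mono) auto
        then show False using e[of t] p by linarith
      qed
      then show ?thesis using p by linarith
    qed
    have dd: "((\<lambda>t. D 5 t - t) has_real_derivative D 6 x - 1) (at x)" for x
      by (rule DERIV_diff[OF d5 DERIV_ident])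
    have "(\<lambda>t. D 5 t - t) X' \<le> (\<lambda>t. D 5 t - t) y"
    proof (rule DERIV_nonneg_imp_nondecreasing[OF Xy])
      fix x assume "X' \<le> x" "x \<le> y"
      then show "\<exists>d. ((\<lambda>t. D 5 t - t) has_real_derivative d) (at x) \<and> d \<ge> 0"
        using dd[of x] g1[of x] by auto
    qed
    then show False using K[rule_format, of X'] K[rule_format, of y] K0 by (simp add: y_def)
  next
    case False
    with x0 have neg0: "D 0 x0 < 0" by simp
    have neg: "D 0 t < 0" if "t \<ge> x0" for t
    proof (rule ccontr)
      assume "\<not> D 0 t < 0"
      then have "0 \<le> D 0 t" by simp
      from IVT'[of "D 0" x0 0 t, OF _ this that c0'] neg0 obtain w where "D 0 w = 0" by auto
      with nz show False by blast
    qed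
    have g1: "D 6 t \<le> -1" if "t \<ge> X'" for t
    proof -
      have p: "D 0 t < 0" "D 0 t > -1/4" using neg[of t] X that unfolding X'_def by auto
      have "D 6 t + D 0 t < -2"
      proof (rule ccontr)
        assume "\<not> ?thesis"
        then have "D 0 t * (D 6 t + D 0 t) \<le> D 0 t * (-2)" using p by (intro mult_left_mono_neg) auto
        then show False using e[of t] p by linarith
      qed
      then show ?thesis using p by linarith
    qed
    have dd: "((\<lambda>t. D 5 t + t) has_real_derivative D 6 x + 1) (at x)" for x
      by (rule DERIV_add[OF d5 DERIV_ident])
    have "(\<lambda>t. D 5 t + t) y \<le> (\<lambda>t. D 5 t + t) X'"
    proof (rule DERIV_nonpos_imp_nonincreasing[OF Xy])
      fix x assume "X' \<le> x" "x \<le> y"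
      then show "\<exists>d. ((\<lambda>t. D 5 t + t) has_real_derivative d) (at x) \<and> d \<le> 0"
        using dd[of x] g1[of x] by auto
    qed
    then show False using K[rule_format, of X'] K[rule_format, of y] K0 by (simp add: y_def)
  qed
qed

theorem mainTheorem2:
  fixes L :: real
  assumes "L > 0"
  shows "\<not> (\<exists>D. Ck_chain 6 {-L..L} D
               \<and> (\<exists>x\<in>{-L..L}. D 0 x \<noteq> 0)
               \<and> (\<forall>x\<in>{-L<..<L}. (1/2) * D 0 x = (D 0 x)^2 * (D 6 x + D 0 x))
               \<and> D 0 L = 0 \<and> D 0 (-L) = 0
               \<and> D 1 L = 0 \<and> D 1 (-L) = 0
               \<and> D 2 L = 0 \<and> D 2 (-L) = 0)
       \<and> \<not> (\<exists>D. Ck_chain 6 UNIV D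
               \<and> (\<exists>x. D 0 x \<noteq> 0)
               \<and> (\<forall>k\<le>5. bounded (range (D k)))
               \<and> (\<forall>x. (1/2) * D 0 x = (D 0 x)^2 * (D 6 x + D 0 x))
               \<and> (D 0 \<longlongrightarrow> 0) at_top \<and> (D 0 \<longlongrightarrow> 0) at_bot)"
proof (intro conjI notI)
  assume "\<exists>D. Ck_chain 6 {-L..L} D
               \<and> (\<exists>x\<in>{-L..L}. D 0 x \<noteq> 0)
               \<and> (\<forall>x\<in>{-L<..<L}. (1/2) * D 0 x = (D 0 x)^2 * (D 6 x + D 0 x))
               \<and> D 0 L = 0 \<and> D 0 (-L) = 0
               \<and> D 1 L = 0 \<and> D 1 (-L) = 0
               \<and> D 2 L = 0 \<and> D 2 (-L) = 0"
  then obtain D where h: "Ck_chain 6 {-L..L} D" "\<exists>x\<in>{-L..L}. D 0 x \<noteq> 0"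
     "\<forall>x\<in>{-L<..<L}. (1/2) * D 0 x = (D 0 x)^2 * (D 6 x + D 0 x)" "D 0 L = 0" "D 0 (-L) = 0"
    by (elim exE conjE)
  show False by (rule part1[OF assms h])
next
  assume "\<exists>D. Ck_chain 6 UNIV D
               \<and> (\<exists>x. D 0 x \<noteq> 0)
               \<and> (\<forall>k\<le>5. bounded (range (D k)))
               \<and> (\<forall>x. (1/2) * D 0 x = (D 0 x)^2 * (D 6 x + D 0 x))
               \<and> (D 0 \<longlongrightarrow> 0) at_top \<and> (D 0 \<longlongrightarrow> 0) at_bot"
  then obtain D :: "nat \<Rightarrow> real \<Rightarrow> real" and x where h: "Ck_chain 6 UNIV D" "D 0 x \<noteq> 0"
     "\<forall>k\<le>5. bounded (range (D k))" "\<forall>x. (1/2) * D 0 x = (D 0 x)^2 * (D 6 x + D 0 x)"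
     "(D 0 \<longlongrightarrow> 0) at_top"
    by (elim exE conjE)
  show False by (rule part2[OF h(1) exI[where P="\<lambda>x. D 0 x \<noteq> 0", OF h(2)] h(3-5)])
qed

end
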